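(* For every integer $d\ge2$, the state on $\mathbb{C}^d\otimes\mathbb{C}^d$ $$\Upsilon=\frac{d}{2d-1}P_+ +\frac{1}{2d-1}\sum_{i=1}^{d-1}|i\,0\rangle\langle i\,0|$$ is symmetrically extendible, where $P_+=|\Psi_+\rangle\langle\Psi_+|$, $|\Psi_+\rangle=\frac1{\sqrt d}\sum_{i=0}^{d-1}|ii\rangle$.
   Context: A state $\rho_{AB}$ on $\mathcal{H}_A\otimes\mathcal{H}_B$ is called symmetrically extendible if there is a state $\rho_{ABB'}$ on $\mathcal{H}_A\otimes\mathcal{H}_B\otimes\mathcal{H}_{B'}$, with $\mathcal{H}_{B'}\cong\mathcal{H}_B$, such that $\rho_{ABB'}$ is invariant under the swap of $B$ and $B'$ and $\mathrm{Tr}_{B'}\rho_{ABB'}=\rho_{AB}$. $|i\,0\rangle=|i\rangle_A|0\rangle_B$. *)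

theory Defs
  imports Complex_Main
begin

text \<open>Finite-dimensional operators are represented by their matrix entries with respect to a
  fixed orthonormal (computational) basis indexed by a finite set I: an operator is a
  function rho :: 'i => 'i => complex, where rho x y is the entry for ket x and bra y.
  Entries outside I are irrelevant.  For C^dA (x) C^dB the basis |a b> is indexed by
  pairs (a,b) with a < dA, b < dB; for A B B' by triples (a,b,b').\<close>

definition hermitian_op :: "'i set \<Rightarrow> ('i \<Rightarrow> 'i \<Rightarrow> complex) \<Rightarrow> bool" where
  "hermitian_op I rho \<longleftrightarrow> (\<forall>x\<in>I. \<forall>y\<in>I. rho x y = cnj (rho y x))"

definition psd_op :: "'i set \<Rightarrow> ('i \<Rightarrow> 'i \<Rightarrow> complex) \<Rightarrow> bool" where
  "psd_op I rho \<longleftrightarrow> (\<forall>v :: 'i \<Rightarrow> complex.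
      (\<Sum>x\<in>I. \<Sum>y\<in>I. cnj (v x) * rho x y * v y) \<in> \<real> \<and>
      0 \<le> Re (\<Sum>x\<in>I. \<Sum>y\<in>I. cnj (v x) * rho x y * v y))"

definition trace_op :: "'i set \<Rightarrow> ('i \<Rightarrow> 'i \<Rightarrow> complex) \<Rightarrow> complex" where
  "trace_op I rho = (\<Sum>x\<in>I. rho x x)"

definition is_state :: "'i set \<Rightarrow> ('i \<Rightarrow> 'i \<Rightarrow> complex) \<Rightarrow> bool" where
  "is_state I rho \<longleftrightarrow> finite I \<and> hermitian_op I rho \<and> psd_op I rho \<and> trace_op I rho = 1"

definition bip_idx :: "nat \<Rightarrow> nat \<Rightarrow> (nat \<times> nat) set" where
  "bip_idx dA dB = {..<dA} \<times> {..<dB}"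

definition trip_idx :: "nat \<Rightarrow> nat \<Rightarrow> (nat \<times> nat \<times> nat) set" where
  "trip_idx dA dB = {..<dA} \<times> {..<dB} \<times> {..<dB}"

definition sym_extendible ::
  "nat \<Rightarrow> nat \<Rightarrow> ((nat \<times> nat) \<Rightarrow> (nat \<times> nat) \<Rightarrow> complex) \<Rightarrow> bool" where
  "sym_extendible dA dB rho \<longleftrightarrow> is_state (bip_idx dA dB) rho \<and>
     (\<exists>sigma :: (nat \<times> nat \<times> nat) \<Rightarrow> (nat \<times> nat \<times> nat) \<Rightarrow> complex.
        is_state (trip_idx dA dB) sigma \<and>
        (\<forall>a<dA. \<forall>b<dB. \<forall>b'<dB. \<forall>a2<dA. \<forall>c<dB. \<forall>c'<dB.
            sigma (a, b', b) (a2, c', c) = sigma (a, b, b') (a2, c, c')) \<and>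
        (\<forall>a<dA. \<forall>b<dB. \<forall>a2<dA. \<forall>c<dB.
            (\<Sum>k<dB. sigma (a, b, k) (a2, c, k)) = rho (a, b) (a2, c)))"

definition psi_plus :: "nat \<Rightarrow> nat \<times> nat \<Rightarrow> complex" where
  "psi_plus d = (\<lambda>(i, j). if i = j then complex_of_real (1 / sqrt (real d)) else 0)"

definition proj :: "('i \<Rightarrow> complex) \<Rightarrow> 'i \<Rightarrow> 'i \<Rightarrow> complex" where
  "proj psi = (\<lambda>x y. psi x * cnj (psi y))"

definition ket :: "'i \<Rightarrow> 'i \<Rightarrow> complex" where
  "ket z = (\<lambda>x. if x = z then 1 else 0)"

definition Upsilon :: "nat \<Rightarrow> (nat \<times> nat) \<Rightarrow> (nat \<times> nat) \<Rightarrow> complex" where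
  "Upsilon d = (\<lambda>x y.
      complex_of_real (real d / (2 * real d - 1)) * proj (psi_plus d) x y
      + complex_of_real (1 / (2 * real d - 1)) * (\<Sum>i\<in>{1..d-1}. proj (ket (i, 0)) x y))"

end

theory Submission
  imports Defs
begin

definition qf :: "'i set \<Rightarrow> ('i \<Rightarrow> 'i \<Rightarrow> complex) \<Rightarrow> ('i \<Rightarrow> complex) \<Rightarrow> complex" where
  "qf I rho v = (\<Sum>x\<in>I. \<Sum>y\<in>I. cnj (v x) * rho x y * v y)"

definition psd' where "psd' I rho \<longleftrightarrow> (\<forall>v. \<exists>r::real. r \<ge> 0 \<and> qf I rho v = complex_of_real r)"

lemma psd'_imp: "psd' I rho \<Longrightarrow> psd_op I rho"
  unfolding psd'_def psd_op_def qf_def by (metis Re_complex_of_real Reals_of_real)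

lemma qf_proj: "qf I (proj psi) v = complex_of_real ((cmod (\<Sum>y\<in>I. cnj (psi y) * v y))^2)"
proof -
  have "qf I (proj psi) v = (\<Sum>x\<in>I. cnj (v x) * psi x) * (\<Sum>y\<in>I. cnj (psi y) * v y)"
    unfolding qf_def proj_def sum_product by (simp add: mult_ac)
  also have "(\<Sum>x\<in>I. cnj (v x) * psi x) = cnj (\<Sum>y\<in>I. cnj (psi y) * v y)"
    by (simp add: mult.commute)
  also have "cnj z * z = complex_of_real ((cmod z)^2)" for z
    using complex_norm_square by (simp add: mult.commute)
  finally show ?thesis .
qed

lemma psd'_proj: "psd' I (proj psi)"
  unfolding psd'_def qf_proj using zero_le_power2 by blast

lemma psd'_scale: "psd' I rho \<Longrightarrow> c \<ge> 0 \<Longrightarrow> psd' I (\<lambda>x y. complex_of_real c * rho x y)"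
proof -
  assume a: "psd' I rho" "c \<ge> 0"
  have "qf I (\<lambda>x y. complex_of_real c * rho x y) v = complex_of_real c * qf I rho v" for v
    unfolding qf_def by (simp add: sum_distrib_left mult_ac)
  then show ?thesis using a unfolding psd'_def
    by (metis mult_nonneg_nonneg of_real_mult)
qed

lemma psd'_add: "psd' I r1 \<Longrightarrow> psd' I r2 \<Longrightarrow> psd' I (\<lambda>x y. r1 x y + r2 x y)"
proof -
  assume a: "psd' I r1" "psd' I r2"
  have "qf I (\<lambda>x y. r1 x y + r2 x y) v = qf I r1 v + qf I r2 v" for v
    unfolding qf_def by (simp add: sum.distrib algebra_simps)
  then show ?thesis using a unfolding psd'_def
    by (metis add_nonneg_nonneg of_real_add)
qed

lemma psd'_sum: "finite S \<Longrightarrow> (\<And>i. i \<in> S \<Longrightarrow> psd' I (r i)) \<Longrightarrow> psd' I (\<lambda>x y. \<Sum>i\<in>S. r i x y)"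
proof (induction S rule: finite_induct)
  case empty
  then show ?case unfolding psd'_def qf_def by auto
next
  case (insert a F)
  then show ?case using psd'_add[of I "r a" "\<lambda>x y. \<Sum>i\<in>F. r i x y"] by simp
qed

lemma Ups_closed:
  assumes "d \<ge> 2"
  shows "Upsilon d (a,b) (a2,c) = ((if a = b \<and> a2 = c then 1 else 0)
     + (if a = a2 \<and> b = 0 \<and> c = 0 \<and> 1 \<le> a \<and> a \<le> d - 1 then 1 else 0)) / complex_of_real (2 * real d - 1)"
proof -
  have d0: "real d > 0" using assms by simp
  have p: "proj (psi_plus d) (a,b) (a2,c) = (if a = b \<and> a2 = c then 1 / of_nat d else 0)"
    unfolding proj_def psi_plus_def using d0
    by (auto simp: of_real_mult[symmetric] real_sqrt_mult_self simp del: of_real_mult)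
  have s: "(\<Sum>i\<in>{1..d-1}. proj (ket (i, 0)) (a,b) (a2,c)) = (if a = a2 \<and> b = 0 \<and> c = 0 \<and> 1 \<le> a \<and> a \<le> d - 1 then 1 else 0)"
  proof -
    have "(\<Sum>i\<in>{1..d-1}. proj (ket (i, 0)) (a,b) (a2,c)) = (\<Sum>i\<in>{1..d-1}. if i = a then (if b = 0 \<and> a2 = a \<and> c = 0 then 1 else 0) else 0)"
      unfolding proj_def ket_def by (rule sum.cong) auto
    then show ?thesis by (auto simp: sum.delta')
  qed
  show ?thesis unfolding Upsilon_def p s using d0
    by (auto simp: field_simps)
qed

definition psi3 :: "nat \<times> nat \<times> nat \<Rightarrow> complex" where
  "psi3 = (\<lambda>(a,b,b'). if (b = a \<and> b' = 0) \<or> (b = 0 \<and> b' = a) then 1 else 0)"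

lemma psi3_inner: "a < d \<Longrightarrow> b < d \<Longrightarrow> (\<Sum>k<d. psi3 (a,b,k)) = (if b = a \<or> b = 0 then 1 else 0)"
proof -
  assume "a < d" "b < d"
  have "(\<Sum>k<d. psi3 (a,b,k)) = of_nat (card {k\<in>{..<d}. (b = a \<and> k = 0) \<or> (b = 0 \<and> k = a)})"
    unfolding psi3_def by (simp add: sum.If_cases Int_def)
  also have "{k\<in>{..<d}. (b = a \<and> k = 0) \<or> (b = 0 \<and> k = a)} = (if b = a \<or> b = 0 then {if b = a then 0 else a} else {})"
    using \<open>a < d\<close> \<open>b < d\<close> by auto
  finally show ?thesis by auto
qed

lemma psi3_trace: "(\<Sum>x\<in>trip_idx d d. psi3 x * cnj (psi3 x)) = of_nat (2 * d - 1)"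
proof -
  have pp: "psi3 x * cnj (psi3 x) = psi3 x" for x unfolding psi3_def by (auto split: prod.splits)
  have "(\<Sum>x\<in>trip_idx d d. psi3 x) = (\<Sum>a<d. \<Sum>b<d. \<Sum>k<d. psi3 (a,b,k))"
    unfolding trip_idx_def by (simp add: sum.cartesian_product)
  also have "\<dots> = (\<Sum>a<d. \<Sum>b<d. (if b = a \<or> b = 0 then 1 else 0))"
    by (rule sum.cong[OF refl], rule sum.cong[OF refl], simp add: psi3_inner)
  also have "\<dots> = (\<Sum>a<d. of_nat (card {b\<in>{..<d}. b = a \<or> b = 0}))"
    by (simp add: sum.If_cases Int_def)
  also have "\<dots> = (\<Sum>a<d. if a = 0 then 1 else 2)"
  proof (rule sum.cong[OF refl])
    fix a assume "a \<in> {..<d}"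
    then have "{b\<in>{..<d}. b = a \<or> b = 0} = {a, 0}" by auto
    then show "of_nat (card {b\<in>{..<d}. b = a \<or> b = 0}) = (if a = 0 then 1 else (2::complex))" by auto
  qed
  also have "\<dots> = of_nat (2 * d - 1)"
  proof (cases d)
    case 0 then show ?thesis by simp
  next
    case (Suc m)
    have "{..<d} = insert 0 {1..<d}" using Suc by auto
    then have "(\<Sum>a<d. if a = 0 then 1 else (2::complex)) = 1 + (\<Sum>a\<in>{1..<d}. 2)" by simp
    also have "\<dots> = of_nat (2 * d - 1)" using Suc by simp
    finally show ?thesis .
  qed
  finally show ?thesis by (simp add: pp)
qed

lemma Ups_trace: assumes "d \<ge> 2" shows "trace_op (bip_idx d d) (Upsilon d) = 1"
proof -
  have "trace_op (bip_idx d d) (Upsilon d) = (\<Sum>a<d. \<Sum>b<d. Upsilon d (a,b) (a,b))"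
    unfolding trace_op_def bip_idx_def by (simp add: sum.cartesian_product)
  also have "\<dots> = (\<Sum>a<d. \<Sum>b<d. ((if a = b then 1 else 0) + (if b = 0 \<and> 1 \<le> a then 1 else 0)) / complex_of_real (2 * real d - 1))"
    by (intro sum.cong refl) (auto simp: Ups_closed[OF assms])
  also have "\<dots> = (\<Sum>a<d. (1 + (if 1 \<le> a then 1 else 0)) / complex_of_real (2 * real d - 1))"
    by (intro sum.cong refl) (auto simp: sum_divide_distrib[symmetric] sum.distrib)
  also have "\<dots> = (of_nat d + of_nat (d - 1)) / complex_of_real (2 * real d - 1)"
  proof -
    have "(\<Sum>a<d. (if 1 \<le> a then 1 else 0)::complex) = of_nat (card {a\<in>{..<d}. 1 \<le> a})"
      by (simp add: sum.If_cases Int_def)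
    also have "{a\<in>{..<d}. 1 \<le> a} = {1..<d}" by auto
    finally have "(\<Sum>a<d. (if 1 \<le> a then 1 else 0)::complex) = of_nat (d - 1)" by simp
    then show ?thesis by (simp add: sum_divide_distrib[symmetric] sum.distrib)
  qed
  also have "\<dots> = 1"
  proof -
    have e: "(of_nat d + of_nat (d - 1) :: complex) = complex_of_real (2 * real d - 1)"
    proof -
      have "real d + real (d - 1) = 2 * real d - 1" using assms by (simp add: of_nat_diff)
      then have "complex_of_real (real d + real (d - 1)) = complex_of_real (2 * real d - 1)" by simp
      then show ?thesis by simp
    qed
    have "2 * real d - 1 \<noteq> 0" using assms by simp
    then have "complex_of_real (2 * real d - 1) \<noteq> 0" by (metis of_real_eq_0_iff)
    then show ?thesis unfolding e by (rule divide_self)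
  qed
  finally show ?thesis .
qed

lemma Ups_state: assumes "d \<ge> 2" shows "is_state (bip_idx d d) (Upsilon d)"
proof -
  have fin: "finite (bip_idx d d)" unfolding bip_idx_def by simp
  have herm: "hermitian_op (bip_idx d d) (Upsilon d)"
    unfolding hermitian_op_def
  proof (intro ballI)
    fix x y assume "x \<in> bip_idx d d" "y \<in> bip_idx d d"
    obtain a b where x: "x = (a,b)" by force
    obtain a2 c where y: "y = (a2,c)" by force
    show "Upsilon d x y = cnj (Upsilon d y x)"
      unfolding x y Ups_closed[OF assms] by auto
  qed
  have psd: "psd_op (bip_idx d d) (Upsilon d)"
  proof (rule psd'_imp)
    have c1: "real d / (2 * real d - 1) \<ge> 0" and c2: "1 / (2 * real d - 1) \<ge> 0" using assms by auto
    show "psd' (bip_idx d d) (Upsilon d)"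
      unfolding Upsilon_def
      by (intro psd'_add psd'_scale[OF psd'_proj c1] psd'_scale[OF _ c2] psd'_sum psd'_proj) simp
  qed
  show ?thesis unfolding is_state_def using fin herm psd Ups_trace[OF assms] by blast
qed

definition sig :: "nat \<Rightarrow> (nat \<times> nat \<times> nat) \<Rightarrow> (nat \<times> nat \<times> nat) \<Rightarrow> complex" where
  "sig d = (\<lambda>x y. complex_of_real (1 / (2 * real d - 1)) * proj psi3 x y)"

lemma cnj_psi3: "cnj (psi3 x) = psi3 x" unfolding psi3_def by (auto split: prod.splits)

lemma sig_state: assumes "d \<ge> 2" shows "is_state (trip_idx d d) (sig d)"
proof -
  have fin: "finite (trip_idx d d)" unfolding trip_idx_def by simp
  have herm: "hermitian_op (trip_idx d d) (sig d)"
    unfolding hermitian_op_def sig_def proj_def by (simp add: cnj_psi3)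
  have psd: "psd_op (trip_idx d d) (sig d)"
  proof (rule psd'_imp)
    have c2: "1 / (2 * real d - 1) \<ge> 0" using assms by auto
    show "psd' (trip_idx d d) (sig d)"
      unfolding sig_def by (rule psd'_scale[OF psd'_proj c2])
  qed
  have tr: "trace_op (trip_idx d d) (sig d) = 1"
  proof -
    have "trace_op (trip_idx d d) (sig d) = complex_of_real (1 / (2 * real d - 1)) * of_nat (2 * d - 1)"
      unfolding trace_op_def sig_def proj_def by (simp only: sum_distrib_left[symmetric] psi3_trace)
    also have "(of_nat (2 * d - 1) :: complex) = complex_of_real (2 * real d - 1)"
    proof -
      have "real (2 * d - 1) = 2 * real d - 1" using assms by (simp add: of_nat_diff)
      then show ?thesis by (metis of_real_of_nat_eq)
    qed
    also have "complex_of_real (1 / (2 * real d - 1)) * complex_of_real (2 * real d - 1) = 1"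
    proof -
      have "2 * real d - 1 \<noteq> 0" using assms by simp
      then have "1 / (2 * real d - 1) * (2 * real d - 1) = 1" by simp
      then show ?thesis by (metis of_real_1 of_real_mult)
    qed
    finally show ?thesis .
  qed
  show ?thesis unfolding is_state_def using fin herm psd tr by blast
qed

lemma sig_swap: "sig d (a, b', b) (a2, c', c) = sig d (a, b, b') (a2, c, c')"
  unfolding sig_def proj_def psi3_def by auto

lemma sig_ptrace: assumes "d \<ge> 2" "a < d" "b < d" "a2 < d" "c < d"
  shows "(\<Sum>k<d. sig d (a, b, k) (a2, c, k)) = Upsilon d (a, b) (a2, c)"
proof -
  have "{..<d} = insert 0 {1..<d}" using assms by auto
  then have "(\<Sum>k<d. psi3 (a,b,k) * psi3 (a2,c,k)) = psi3 (a,b,0) * psi3 (a2,c,0) + (\<Sum>k\<in>{1..<d}. psi3 (a,b,k) * psi3 (a2,c,k))"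
    by simp
  also have "psi3 (a,b,0) * psi3 (a2,c,0) = (if a = b \<and> a2 = c then 1 else 0)"
    unfolding psi3_def by auto
  also have "(\<Sum>k\<in>{1..<d}. psi3 (a,b,k) * psi3 (a2,c,k)) = (\<Sum>k\<in>{1..<d}. if k = a then (if b = 0 \<and> c = 0 \<and> a2 = a then 1 else 0) else 0)"
    by (rule sum.cong[OF refl]) (auto simp: psi3_def)
  also have "\<dots> = (if a = a2 \<and> b = 0 \<and> c = 0 \<and> 1 \<le> a \<and> a \<le> d - 1 then 1 else 0)"
    using assms by (auto simp: sum.delta')
  finally have e: "(\<Sum>k<d. psi3 (a,b,k) * psi3 (a2,c,k)) = (if a = b \<and> a2 = c then 1 else 0) + (if a = a2 \<and> b = 0 \<and> c = 0 \<and> 1 \<le> a \<and> a \<le> d - 1 then 1 else 0)" .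
  have "(\<Sum>k<d. sig d (a, b, k) (a2, c, k)) = complex_of_real (1 / (2 * real d - 1)) * (\<Sum>k<d. psi3 (a,b,k) * psi3 (a2,c,k))"
    unfolding sig_def proj_def by (simp add: sum_distrib_left cnj_psi3)
  also have "\<dots> = Upsilon d (a, b) (a2, c)"
    unfolding e Ups_closed[OF assms(1)] by (simp add: divide_inverse mult.commute)
  finally show ?thesis .
qed

theorem mainTheorem4:
  fixes d :: nat
  assumes "d \<ge> 2"
  shows "is_state (bip_idx d d) (Upsilon d) \<and> sym_extendible d d (Upsilon d)"
  unfolding sym_extendible_def
  using Ups_state[OF assms] sig_state[OF assms] sig_swap sig_ptrace[OF assms] by blast

end
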